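(* Let $z_0\in\mathbb{R}^n$ be a row vector with $z_0[i]\ge0$ for $i\in\mathcal{V}$, $z_0[(i,j)]=0$ for $(i,j)\in\mathcal{E}$, and $\sum_j z_0[j]>0$, and define $z_k=z_{k-1}M_k$ for $k\ge1$. Let $\mu_z$ satisfy $0<\mu_z\le\sum_j z_0[j]$, let $c=\min\{M[a,b]: M\in\mathcal{M},\,M[a,b]>0\}$, let $l$ be a positive integer such that for every $i\in\mathcal{V}$ there exist $l$ matrices in $\mathcal{M}$ (possibly repeated) whose product, in some order, has all entries of its column indexed by $i$ strictly positive, and set $\mu=\mu_z c^l/n$. Then for each $i\in\mathcal{V}$, with probability $1$, $z_k[i]\ge\mu$ for infinitely many $k$.
   Context: Let $\mathcal{G}=(\mathcal{V},\mathcal{E})$ be a strongly connected directed graph with $\mathcal{V}=\{1,\dots,m\}$, with a self-loop $(i,i)\in\mathcal{E}$ at every node. Let $\mathcal{O}_i=\{j:(i,j)\in\mathcal{E}\}$ and $D_i=|\mathcal{O}_i|$. At each time step $k\ge1$ each link $(i,j)\in\mathcal{E}$ is reliable with probability $q_{ij}\in(0,1]$, independently across links and across time steps; let $X_k[i,j]=1$ if $(i,j)$ is reliable at step $k$ and $0$ otherwise. Let $n=m+|\mathcal{E}|$ and index vector entries and rows/columns of $n\times n$ matrices by $\mathcal{V}\cup\mathcal{E}$. The random matrix $M_k$ is defined by: for $i\in\mathcal{V}$ and $(i,j)\in\mathcal{E}$, $M_k[i,j]=X_k[i,j]/D_i$ and $M_k[i,(i,j)]=(1-X_k[i,j])/D_i$,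 all other entries of row $i$ being $0$; for $(i,j)\in\mathcal{E}$, $M_k[(i,j),j]=X_k[i,j]$ and $M_k[(i,j),(i,j)]=1-X_k[i,j]$, all other entries of row $(i,j)$ being $0$. $\mathcal{M}$ denotes the finite set of all $2^{|\mathcal{E}|}$ matrices obtainable this way. *)

theory Defs
  imports "HOL-Probability.Probability"
begin

text \<open>Vertices are the elements of a finite type 'v (so m = CARD('v)); edges are a set
  E of ordered pairs.  Vector / matrix entries are indexed by 'v + ('v \<times> 'v):
  Inl i stands for the node i, Inr (i,j) for the link (i,j).  Only indices in
  idx E = V \<union> E are meaningful; vectors and matrices are functions on this type,
  and all sums range over idx E.\<close>

definition idx :: "('v \<times> 'v) set \<Rightarrow> ('v + 'v \<times> 'v) set" where
  "idx E = range Inl \<union> Inr ` E"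

definition outdeg :: "('v \<times> 'v) set \<Rightarrow> 'v \<Rightarrow> nat" where
  "outdeg E i = card {j. (i, j) \<in> E}"

text \<open>The matrix M determined by a reliability pattern X (X e = True iff link e reliable).\<close>
definition Mmat :: "('v \<times> 'v) set \<Rightarrow> ('v \<times> 'v \<Rightarrow> bool) \<Rightarrow> ('v + 'v \<times> 'v) \<Rightarrow> ('v + 'v \<times> 'v) \<Rightarrow> real" where
  "Mmat E X a b =
     (case a of
        Inl i \<Rightarrow>
          (case b of
             Inl j \<Rightarrow> (if (i, j) \<in> E \<and> X (i, j) then 1 / real (outdeg E i) else 0)
           | Inr e \<Rightarrow> (if e \<in> E \<and> fst e = i \<and> \<not> X e then 1 / real (outdeg E i) else 0))
      | Inr e \<Rightarrow>
          (if e \<in> E then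
             (case b of
                Inl j \<Rightarrow> (if j = snd e \<and> X e then 1 else 0)
              | Inr e' \<Rightarrow> (if e' = e \<and> \<not> X e then 1 else 0))
           else 0))"

definition Mset :: "('v \<times> 'v) set \<Rightarrow> (('v + 'v \<times> 'v) \<Rightarrow> ('v + 'v \<times> 'v) \<Rightarrow> real) set" where
  "Mset E = {Mmat E X | X. True}"

definition vecmat :: "('v \<times> 'v) set \<Rightarrow> (('v + 'v \<times> 'v) \<Rightarrow> real) \<Rightarrow> (('v + 'v \<times> 'v) \<Rightarrow> ('v + 'v \<times> 'v) \<Rightarrow> real) \<Rightarrow> ('v + 'v \<times> 'v) \<Rightarrow> real" where
  "vecmat E z M b = (\<Sum>a\<in>idx E. z a * M a b)"

definition matmul :: "('v \<times> 'v) set \<Rightarrow> (('v + 'v \<times> 'v) \<Rightarrow> ('v + 'v \<times> 'v) \<Rightarrow> real) \<Rightarrow> (('v + 'v \<times> 'v) \<Rightarrow> ('v + 'v \<times> 'v) \<Rightarrow> real) \<Rightarrow> ('v + 'v \<times> 'v) \<Rightarrow> ('v + 'v \<times> 'v) \<Rightarrow> real" where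
  "matmul E A B a b = (\<Sum>c\<in>idx E. A a c * B c b)"

fun matprod :: "('v \<times> 'v) set \<Rightarrow> (('v + 'v \<times> 'v) \<Rightarrow> ('v + 'v \<times> 'v) \<Rightarrow> real) list \<Rightarrow> ('v + 'v \<times> 'v) \<Rightarrow> ('v + 'v \<times> 'v) \<Rightarrow> real" where
  "matprod E [] = (\<lambda>a b. if a = b then 1 else 0)"
| "matprod E (A # As) = matmul E A (matprod E As)"

definition cmin :: "('v \<times> 'v) set \<Rightarrow> real" where
  "cmin E = Min {M a b | M a b. M \<in> Mset E \<and> a \<in> idx E \<and> b \<in> idx E \<and> M a b > 0}"

text \<open>Probability space of link reliabilities: \<omega> (k, e) = X_k[e] for k \<ge> 1, e \<in> E,
  independent Bernoulli(q e).\<close>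
definition Xprob :: "('v \<times> 'v) set \<Rightarrow> ('v \<times> 'v \<Rightarrow> real) \<Rightarrow> (nat \<times> ('v \<times> 'v) \<Rightarrow> bool) measure" where
  "Xprob E q = PiM ({1..} \<times> E) (\<lambda>ke. measure_pmf (bernoulli_pmf (q (snd ke))))"

fun zseq :: "('v \<times> 'v) set \<Rightarrow> (('v + 'v \<times> 'v) \<Rightarrow> real) \<Rightarrow> (nat \<times> ('v \<times> 'v) \<Rightarrow> bool) \<Rightarrow> nat \<Rightarrow> ('v + 'v \<times> 'v) \<Rightarrow> real" where
  "zseq E z0 \<omega> 0 = z0"
| "zseq E z0 \<omega> (Suc k) = vecmat E (zseq E z0 \<omega> k) (Mmat E (\<lambda>e. \<omega> (Suc k, e)))"

end

theory Submission
  imports Defs "HOL-Library.Infinite_Set"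
begin


definition Rrel :: "('v \<times> 'v) set \<Rightarrow> ('v + 'v \<times> 'v) \<Rightarrow> ('v + 'v \<times> 'v) \<Rightarrow> bool" where
  "Rrel E s t \<longleftrightarrow> s = t \<or> (\<exists>v j. s = Inr (v, j) \<and> (v, j) \<in> E \<and> (t = Inl v \<or> t = Inl j))"

lemma Mmat_nonneg: "Mmat E X a b \<ge> 0"
  unfolding Mmat_def by (auto split: sum.split)

lemma matprod_nonneg: "set Ms \<subseteq> Mset E \<Longrightarrow> matprod E Ms a b \<ge> 0"
proof (induction Ms arbitrary: a b)
  case Nil then show ?case by simp
next
  case (Cons M Ms)
  then obtain X where "M = Mmat E X" by (auto simp: Mset_def)
  with Cons show ?case
    by (auto simp: matmul_def Mmat_nonneg intro!: sum_nonneg mult_nonneg_nonneg)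
qed

lemma outdeg_pos:
  fixes E :: "('v::finite \<times> 'v) set"
  assumes "(v, v) \<in> E" shows "outdeg E v > 0"
proof -
  have "finite {j. (v, j) \<in> E}" by simp
  moreover have "v \<in> {j. (v, j) \<in> E}" using assms by simp
  ultimately show ?thesis unfolding outdeg_def by (auto simp: card_gt_0_iff)
qed

lemma idx_finite: "finite (idx (E :: ('v::finite \<times> 'v) set))" by simp

lemma cmin_facts:
  fixes E :: "('v::finite \<times> 'v) set"
  assumes sl: "\<forall>u. (u, u) \<in> E"
  shows "cmin E > 0"
    and "\<And>M a b. M \<in> Mset E \<Longrightarrow> a \<in> idx E \<Longrightarrow> b \<in> idx E \<Longrightarrow> M a b > 0 \<Longrightarrow> cmin E \<le> M a b"
proof -
  let ?S = "{M a b | M a b. M \<in> Mset E \<and> a \<in> idx E \<and> b \<in> idx E \<and> M a b > 0}"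
  have fM: "finite (Mset E)" unfolding Mset_def
  proof -
    have "{Mmat E X |X. True} = range (Mmat E)" by auto
    then show "finite {Mmat E X |X. True}" by simp
  qed
  have "?S \<subseteq> (\<lambda>(M, a, b). M a b) ` (Mset E \<times> idx E \<times> idx E)" by force
  moreover have "finite ((\<lambda>(M, a, b). M a b) ` (Mset E \<times> idx E \<times> idx E))"
    using fM by simp
  ultimately have fin: "finite ?S" by (rule finite_subset)
  obtain v :: 'v where True by simp
  have "Mmat E (\<lambda>_. True) (Inl v) (Inl v) > 0"
    using outdeg_pos[of v E] sl by (simp add: Mmat_def)
  moreover have "Mmat E (\<lambda>_. True) \<in> Mset E" by (auto simp: Mset_def)
  ultimately have "Mmat E (\<lambda>_. True) (Inl v) (Inl v) \<in> ?S"
    by (intro CollectI exI[of _ "Mmat E (\<lambda>_. True)"] exI[of _ "Inl v"]) (auto simp: idx_def)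
  then have ne: "?S \<noteq> {}" by blast
  show "cmin E > 0" unfolding cmin_def using Min_in[OF fin ne] by auto
  show "\<And>M a b. M \<in> Mset E \<Longrightarrow> a \<in> idx E \<Longrightarrow> b \<in> idx E \<Longrightarrow> M a b > 0 \<Longrightarrow> cmin E \<le> M a b"
    unfolding cmin_def using fin by (intro Min_le) auto
qed

lemma step:
  fixes E :: "('v::finite \<times> 'v) set"
  assumes sl: "\<forall>u. (u, u) \<in> E"
    and a: "a \<in> idx E" and t: "t \<in> idx E" and R: "Rrel E a t"
    and pos: "Mmat E X a c > 0"
  shows "\<exists>t'\<in>idx E. Mmat E (\<lambda>_. True) t t' > 0 \<and> Rrel E c t'"
proof -
  have D: "\<And>v. real (outdeg E v) > 0" using outdeg_pos sl by auto
  have inl: "\<And>v. Inl v \<in> idx E" by (simp add: idx_def)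
  show ?thesis
  proof (cases a)
    case (Inl v)
    with R have tv: "t = Inl v" by (auto simp: Rrel_def)
    show ?thesis
    proof (cases c)
      case (Inl j)
      with pos \<open>a = Inl v\<close> have "(v, j) \<in> E" by (auto simp: Mmat_def split: if_splits)
      then show ?thesis using tv Inl D inl
        by (intro bexI[of _ "Inl j"]) (auto simp: Mmat_def Rrel_def)
    next
      case (Inr e)
      with pos \<open>a = Inl v\<close> have "e \<in> E" "fst e = v" by (auto simp: Mmat_def split: if_splits)
      then show ?thesis using tv Inr D inl sl
        by (intro bexI[of _ "Inl v"]) (cases e, auto simp: Mmat_def Rrel_def)
    qed
  next
    case (Inr e)
    obtain u w where e: "e = (u, w)" by force
    from pos Inr have eE: "e \<in> E" by (auto simp: Mmat_def split: if_splits)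
    from pos Inr e have c: "c = Inl w \<or> c = Inr (u, w)"
      by (auto simp: Mmat_def split: if_splits sum.splits)
    from R Inr e have "t = Inr (u, w) \<or> t = Inl u \<or> t = Inl w" by (auto simp: Rrel_def)
    then show ?thesis
    proof (elim disjE)
      assume "t = Inr (u, w)"
      then show ?thesis using c eE e inl
        by (intro bexI[of _ "Inl w"]) (auto simp: Mmat_def Rrel_def)
    next
      assume tu: "t = Inl u"
      from c show ?thesis
      proof
        assume "c = Inl w" then show ?thesis using tu eE e inl D
          by (intro bexI[of _ "Inl w"]) (auto simp: Mmat_def Rrel_def)
      next
        assume "c = Inr (u, w)" then show ?thesis using tu eE e inl D sl
          by (intro bexI[of _ "Inl u"]) (auto simp: Mmat_def Rrel_def)
      qed
    next
      assume tw: "t = Inl w"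
      from c show ?thesis using tw eE e inl D sl
        by (intro bexI[of _ "Inl w"]) (auto simp: Mmat_def Rrel_def)
    qed
  qed
qed

lemma path:
  fixes E :: "('v::finite \<times> 'v) set"
  assumes sl: "\<forall>u. (u, u) \<in> E"
  shows "set Ms \<subseteq> Mset E \<Longrightarrow> matprod E Ms a b > 0 \<Longrightarrow> a \<in> idx E \<Longrightarrow> t \<in> idx E \<Longrightarrow> Rrel E a t
    \<Longrightarrow> \<exists>t'. Rrel E b t' \<and> matprod E (replicate (length Ms) (Mmat E (\<lambda>_. True))) t t' \<ge> cmin E ^ length Ms"
proof (induction Ms arbitrary: a t)
  case Nil
  then have "a = b" by (auto split: if_splits)
  then show ?case using Nil by auto
next
  case (Cons M Ms)
  let ?A = "Mmat E (\<lambda>_. True)"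
  from Cons.prems obtain X where MX: "M = Mmat E X" by (auto simp: Mset_def)
  have sMs: "set Ms \<subseteq> Mset E" using Cons.prems by auto
  have "(\<Sum>c\<in>idx E. M a c * matprod E Ms c b) > 0" using Cons.prems by (simp add: matmul_def)
  then obtain c where c: "c \<in> idx E" "M a c * matprod E Ms c b > 0"
    by (metis (no_types, lifting) linorder_not_le sum_nonpos)
  have "M a c \<ge> 0" "matprod E Ms c b \<ge> 0" using MX Mmat_nonneg matprod_nonneg[OF sMs] by auto
  with c have pos1: "M a c > 0" and pos2: "matprod E Ms c b > 0"
    by (auto simp: zero_less_mult_iff)
  obtain t' where t': "t' \<in> idx E" "?A t t' > 0" "Rrel E c t'"
    using step[OF sl Cons.prems(3,4,5), of X c] pos1 MX by auto
  obtain t'' where t'': "Rrel E b t''" "matprod E (replicate (length Ms) ?A) t' t'' \<ge> cmin E ^ length Ms"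
    using Cons.IH[OF sMs pos2 c(1) t'(1) t'(3)] by blast
  have AM: "?A \<in> Mset E" by (auto simp: Mset_def)
  have sA: "set (replicate (length Ms) ?A) \<subseteq> Mset E" using AM by auto
  have "cmin E \<le> ?A t t'" using cmin_facts(2)[OF sl AM Cons.prems(4) t'(1) t'(2)] .
  have cpos: "cmin E > 0" using cmin_facts(1)[OF sl] .
  have "cmin E ^ length (M # Ms) = cmin E * cmin E ^ length Ms" by simp
  also have "\<dots> \<le> ?A t t' * matprod E (replicate (length Ms) ?A) t' t''"
    using \<open>cmin E \<le> ?A t t'\<close> t''(2) cpos by (intro mult_mono) auto
  also have "\<dots> \<le> (\<Sum>d\<in>idx E. ?A t d * matprod E (replicate (length Ms) ?A) d t'')"
    using t'(1) by (intro member_le_sum) (auto intro!: mult_nonneg_nonneg Mmat_nonneg matprod_nonneg[OF sA])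
  also have "\<dots> = matprod E (replicate (length (M # Ms)) ?A) t t''"
    by (simp add: matmul_def)
  finally show ?case using t''(1) by blast
qed

lemma col_bound:
  fixes E :: "('v::finite \<times> 'v) set"
  assumes sl: "\<forall>u. (u, u) \<in> E"
    and l_prop: "\<forall>v. \<exists>Ms. length Ms = l \<and> set Ms \<subseteq> Mset E \<and>
                       (\<forall>a\<in>idx E. matprod E Ms a (Inl v) > 0)"
    and a: "a \<in> idx E"
  shows "matprod E (replicate l (Mmat E (\<lambda>_. True))) a (Inl i) \<ge> cmin E ^ l"
proof -
  obtain Ms where Ms: "length Ms = l" "set Ms \<subseteq> Mset E" "\<forall>a\<in>idx E. matprod E Ms a (Inl i) > 0"
    using l_prop by blast
  obtain t' where "Rrel E (Inl i) t'" "matprod E (replicate l (Mmat E (\<lambda>_. True))) a t' \<ge> cmin E ^ l"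
    using path[OF sl Ms(2) Ms(3)[rule_format, OF a] a a] Ms(1) by (auto simp: Rrel_def)
  moreover then have "t' = Inl i" by (auto simp: Rrel_def)
  ultimately show ?thesis by simp
qed

lemma vecmat_assoc: "vecmat E (vecmat E z M) N b = vecmat E z (matmul E M N) b"
proof -
  have "vecmat E (vecmat E z M) N b = (\<Sum>a\<in>idx E. \<Sum>c\<in>idx E. z c * M c a * N a b)"
    unfolding vecmat_def by (simp add: sum_distrib_right)
  also have "\<dots> = (\<Sum>c\<in>idx E. \<Sum>a\<in>idx E. z c * M c a * N a b)" by (rule sum.swap)
  also have "\<dots> = vecmat E z (matmul E M N) b"
    unfolding vecmat_def matmul_def by (simp add: sum_distrib_left mult.assoc)
  finally show ?thesis .
qed

lemma Mmat_true: "\<forall>e\<in>E. X e \<Longrightarrow> Mmat E X = Mmat E (\<lambda>_. True)"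
  by (auto simp: Mmat_def fun_eq_iff split: sum.split)

lemma zseq_block:
  fixes E :: "('v::finite \<times> 'v) set"
  shows "(\<forall>j\<in>{1..n}. \<forall>e\<in>E. \<omega> (k + j, e)) \<Longrightarrow> b \<in> idx E \<Longrightarrow>
    zseq E z0 \<omega> (k + n) b = vecmat E (zseq E z0 \<omega> k) (matprod E (replicate n (Mmat E (\<lambda>_. True)))) b"
proof (induction n arbitrary: k)
  case 0
  have "vecmat E (zseq E z0 \<omega> k) (matprod E []) b = zseq E z0 \<omega> k b"
  proof -
    have "(\<lambda>a. zseq E z0 \<omega> k a * (if a = b then 1 else 0)) = (\<lambda>a. if a = b then zseq E z0 \<omega> k a else 0)"
      by auto
    then show ?thesis using 0(2) unfolding vecmat_def matprod.simps
      by (simp only:) (subst sum.delta[OF idx_finite], simp)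
  qed
  then show ?case by simp
next
  case (Suc n)
  have h: "\<forall>j\<in>{1..n}. \<forall>e\<in>E. \<omega> (Suc k + j, e)" using Suc.prems(1) by force
  have "zseq E z0 \<omega> (k + Suc n) b = zseq E z0 \<omega> (Suc k + n) b" by simp
  also have "\<dots> = vecmat E (zseq E z0 \<omega> (Suc k)) (matprod E (replicate n (Mmat E (\<lambda>_. True)))) b"
    using Suc.IH[OF h Suc.prems(2)] .
  also have "zseq E z0 \<omega> (Suc k) = vecmat E (zseq E z0 \<omega> k) (Mmat E (\<lambda>_. True))"
  proof -
    have "\<forall>e\<in>E. \<omega> (Suc k, e)" using Suc.prems(1) by (metis Suc_eq_plus1 add.commute atLeastAtMost_iff le_add1 le_refl)
    then have "Mmat E (\<lambda>e. \<omega> (Suc k, e)) = Mmat E (\<lambda>_. True)" by (rule Mmat_true)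
    then show ?thesis by simp
  qed
  finally show ?case by (simp add: vecmat_assoc)
qed

lemma sum_idx:
  fixes E :: "('v::finite \<times> 'v) set"
  shows "sum f (idx E) = (\<Sum>v\<in>UNIV. f (Inl v)) + (\<Sum>e\<in>E. f (Inr e))"
proof -
  have "sum f (idx E) = sum f (range Inl) + sum f (Inr ` E)"
    unfolding idx_def by (rule sum.union_disjoint) auto
  also have "sum f (range Inl) = (\<Sum>v\<in>UNIV. f (Inl v))"
    by (subst sum.reindex) (auto simp: inj_on_def)
  also have "sum f (Inr ` E) = (\<Sum>e\<in>E. f (Inr e))"
    by (subst sum.reindex) (auto simp: inj_on_def)
  finally show ?thesis .
qed

lemma row_sum:
  fixes E :: "('v::finite \<times> 'v) set"
  assumes sl: "\<forall>u. (u, u) \<in> E" and a: "a \<in> idx E"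
  shows "(\<Sum>b\<in>idx E. Mmat E X a b) = 1"
proof (cases a)
  case (Inl v)
  define Ov where "Ov = {j. (v, j) \<in> E}"
  define D where "D = real (outdeg E v)"
  have D: "D = real (card Ov)" "D > 0" using outdeg_pos[of v E] sl by (auto simp: D_def Ov_def outdeg_def)
  have fO: "finite Ov" by simp
  have 1: "(\<Sum>j\<in>UNIV. Mmat E X a (Inl j)) = (\<Sum>j\<in>Ov. if X (v, j) then 1 / D else 0)"
  proof -
    have "(\<Sum>j\<in>Ov. if X (v, j) then 1 / D else 0) = (\<Sum>j\<in>{j \<in> UNIV. (v, j) \<in> E}. if X (v, j) then 1 / D else 0)"
      by (simp add: Ov_def)
    also have "\<dots> = (\<Sum>j\<in>UNIV. if (v, j) \<in> E then (if X (v, j) then 1 / D else 0) else 0)"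
      by (rule sum.inter_filter) simp
    also have "\<dots> = (\<Sum>j\<in>UNIV. Mmat E X a (Inl j))"
      by (rule sum.cong) (auto simp: Mmat_def Inl D_def)
    finally show ?thesis by simp
  qed
  have 2: "(\<Sum>e\<in>E. Mmat E X a (Inr e)) = (\<Sum>j\<in>Ov. if X (v, j) then 0 else 1 / D)"
  proof -
    have "(\<Sum>j\<in>Ov. if X (v, j) then 0 else 1 / D) = (\<Sum>e\<in>Pair v ` Ov. if X e then 0 else 1 / D)"
      by (subst sum.reindex) (auto simp: inj_on_def)
    also have "Pair v ` Ov = {e \<in> E. fst e = v}" by (auto simp: Ov_def)
    also have "(\<Sum>e\<in>{e \<in> E. fst e = v}. if X e then 0 else 1 / D) = (\<Sum>e\<in>E. if fst e = v then (if X e then 0 else 1 / D) else 0)"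
      by (rule sum.inter_filter) simp
    also have "\<dots> = (\<Sum>e\<in>E. Mmat E X a (Inr e))"
      by (rule sum.cong) (auto simp: Mmat_def Inl D_def)
    finally show ?thesis by simp
  qed
  have "(\<Sum>b\<in>idx E. Mmat E X a b) = (\<Sum>j\<in>Ov. (if X (v, j) then 1 / D else 0) + (if X (v, j) then 0 else 1 / D))"
    unfolding sum_idx 1 2 sum.distrib ..
  also have "\<dots> = (\<Sum>j\<in>Ov. 1 / D)" by (rule sum.cong) auto
  also have "\<dots> = 1" using D by (auto simp: card_gt_0_iff)
  finally show ?thesis .
next
  case (Inr e)
  with a have eE: "e \<in> E" by (auto simp: idx_def)
  have 1: "(\<Sum>j\<in>UNIV. Mmat E X a (Inl j)) = (if X e then 1 else 0)"
  proof -
    have "(\<Sum>j\<in>UNIV. Mmat E X a (Inl j)) = (\<Sum>j\<in>UNIV. if j = snd e then (if X e then 1 else 0) else 0)"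
      by (rule sum.cong) (auto simp: Mmat_def Inr eE)
    then show ?thesis by simp
  qed
  have 2: "(\<Sum>e'\<in>E. Mmat E X a (Inr e')) = (if X e then 0 else 1)"
  proof -
    have "(\<Sum>e'\<in>E. Mmat E X a (Inr e')) = (\<Sum>e'\<in>E. if e' = e then (if X e then 0 else 1) else 0)"
      by (rule sum.cong) (auto simp: Mmat_def Inr eE)
    then show ?thesis using eE by simp
  qed
  show ?thesis unfolding sum_idx 1 2 by simp
qed

lemma vecmat_sum:
  fixes E :: "('v::finite \<times> 'v) set"
  assumes sl: "\<forall>u. (u, u) \<in> E"
  shows "(\<Sum>b\<in>idx E. vecmat E z (Mmat E X) b) = (\<Sum>a\<in>idx E. z a)"
proof -
  have "(\<Sum>b\<in>idx E. vecmat E z (Mmat E X) b) = (\<Sum>a\<in>idx E. z a * (\<Sum>b\<in>idx E. Mmat E X a b))"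
    unfolding vecmat_def by (subst sum.swap) (simp add: sum_distrib_left)
  also have "\<dots> = (\<Sum>a\<in>idx E. z a)" by (rule sum.cong) (auto simp: row_sum[OF sl])
  finally show ?thesis .
qed

lemma zseq_sum:
  fixes E :: "('v::finite \<times> 'v) set"
  assumes sl: "\<forall>u. (u, u) \<in> E"
  shows "(\<Sum>b\<in>idx E. zseq E z0 \<omega> k b) = (\<Sum>a\<in>idx E. z0 a)"
  by (induction k) (simp_all add: vecmat_sum[OF sl])

lemma zseq_nonneg:
  fixes E :: "('v::finite \<times> 'v) set"
  assumes z0_nodes: "\<forall>v. z0 (Inl v) \<ge> 0" and z0_links: "\<forall>e\<in>E. z0 (Inr e) = 0"
  shows "a \<in> idx E \<Longrightarrow> zseq E z0 \<omega> k a \<ge> 0"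
proof (induction k arbitrary: a)
  case 0 then show ?case using assms by (auto simp: idx_def)
next
  case (Suc k) then show ?case
    by (auto simp: vecmat_def intro!: sum_nonneg mult_nonneg_nonneg Mmat_nonneg)
qed

lemma block_bound:
  fixes E :: "('v::finite \<times> 'v) set"
  assumes sl: "\<forall>u. (u, u) \<in> E"
    and z0_nodes: "\<forall>v. z0 (Inl v) \<ge> 0" and z0_links: "\<forall>e\<in>E. z0 (Inr e) = 0"
    and mu_z_pos: "0 < mu_z" and mu_z_le: "mu_z \<le> (\<Sum>a\<in>idx E. z0 a)"
    and l_prop: "\<forall>v. \<exists>Ms. length Ms = l \<and> set Ms \<subseteq> Mset E \<and>
                       (\<forall>a\<in>idx E. matprod E Ms a (Inl v) > 0)"
    and blk: "\<forall>j\<in>{1..l}. \<forall>e\<in>E. \<omega> (k + j, e)"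
  shows "zseq E z0 \<omega> (k + l) (Inl i) \<ge> mu_z * cmin E ^ l / real (card (idx E))"
proof -
  let ?P = "matprod E (replicate l (Mmat E (\<lambda>_. True)))"
  have c0: "cmin E ^ l \<ge> 0" using cmin_facts(1)[OF sl] by simp
  have "Inl i \<in> idx E" by (simp add: idx_def)
  then have "zseq E z0 \<omega> (k + l) (Inl i) = (\<Sum>a\<in>idx E. zseq E z0 \<omega> k a * ?P a (Inl i))"
    using zseq_block[OF blk] by (simp add: vecmat_def)
  also have "\<dots> \<ge> (\<Sum>a\<in>idx E. zseq E z0 \<omega> k a * cmin E ^ l)"
    by (rule sum_mono, rule mult_left_mono[OF col_bound[OF sl l_prop]])
       (auto intro: zseq_nonneg[OF z0_nodes z0_links])
  finally have "zseq E z0 \<omega> (k + l) (Inl i) \<ge> cmin E ^ l * (\<Sum>a\<in>idx E. z0 a)"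
    by (simp add: sum_distrib_right[symmetric] zseq_sum[OF sl] mult.commute[of "cmin E ^ l"])
  moreover have "cmin E ^ l * (\<Sum>a\<in>idx E. z0 a) \<ge> mu_z * cmin E ^ l"
    using mu_z_le c0 by (simp add: mult.commute[of "cmin E ^ l"] mult_right_mono)
  moreover have cI: "card (idx E) \<ge> 1"
  proof -
    obtain v :: 'v where True by simp
    have "Inl v \<in> idx E" by (simp add: idx_def)
    then show ?thesis using idx_finite[of E] by (metis One_nat_def Suc_leI card_gt_0_iff empty_iff)
  qed
  moreover have "mu_z * cmin E ^ l / real (card (idx E)) \<le> mu_z * cmin E ^ l"
  proof -
    have "0 \<le> mu_z * cmin E ^ l" using mu_z_pos c0 by simp
    moreover have "real (card (idx E)) \<ge> 1" using cI by simp
    ultimately show ?thesis by (simp add: divide_le_eq mult_le_cancel_left1)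
  qed
  ultimately show ?thesis by linarith
qed



lemma coord_indep:
  fixes I :: "'i set" and M :: "'i \<Rightarrow> 'a measure"
  assumes M: "\<And>i. prob_space (M i)" and ne: "I \<noteq> {}"
  shows "prob_space.indep_vars (PiM I M) M (\<lambda>i \<omega>. \<omega> i) I"
proof -
  interpret P: prob_space "PiM I M" by (rule prob_space_PiM) (rule M)
  have rv: "\<And>i. i \<in> I \<Longrightarrow> (\<lambda>\<omega>. \<omega> i) \<in> measurable (PiM I M) (M i)"
    by (rule measurable_component_singleton)
  show ?thesis
  proof (subst P.indep_vars_iff_distr_eq_PiM'[OF ne rv])
    show "distr (PiM I M) (PiM I M) (\<lambda>x. \<lambda>i\<in>I. x i) = (PiM I (\<lambda>i. distr (PiM I M) (M i) (\<lambda>x. x i)))"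
    proof -
      have "distr (PiM I M) (PiM I M) (\<lambda>x. \<lambda>i\<in>I. x i) = distr (PiM I M) (PiM I M) (\<lambda>x. x)"
        by (rule distr_cong) (auto simp: space_PiM PiE_def extensional_restrict)
      also have "\<dots> = PiM I M" by (rule distr_id2) simp
      also have "\<dots> = PiM I (\<lambda>i. distr (PiM I M) (M i) (\<lambda>x. x i))"
        by (rule PiM_cong) (auto simp: distr_PiM_component M)
      finally show ?thesis .
    qed
  qed simp
qed

lemma prob_part:
  fixes E :: "('v \<times> 'v) set" and q :: "'v \<times> 'v \<Rightarrow> real" and l :: nat
  assumes fE: "finite E" and En: "E \<noteq> {}" and q_range: "\<forall>e\<in>E. 0 < q e \<and> q e \<le> 1" and l_pos: "l > 0"
  shows "AE \<omega> in Xprob E q. \<forall>N. \<exists>m\<ge>N. \<forall>j\<in>{1..l}. \<forall>e\<in>E. \<omega> (m * l + j, e)"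
proof -
  define I where "I = ({1..} \<times> E :: (nat \<times> ('v \<times> 'v)) set)"
  define M' where "M' = (\<lambda>ke :: nat \<times> ('v \<times> 'v). measure_pmf (bernoulli_pmf (q (snd ke))))"
  define P where "P = Xprob E q"
  have P_def': "P = PiM I M'" by (simp add: P_def Xprob_def I_def M'_def)
  have Mp: "\<And>i. prob_space (M' i)" by (simp add: M'_def prob_space_measure_pmf)
  interpret P: prob_space P unfolding P_def' by (rule prob_space_PiM) (rule Mp)
  interpret PP: product_prob_space M' I by (rule product_prob_spaceI) (rule Mp)
  have Ine: "I \<noteq> {}" using En by (auto simp: I_def)
  have ind: "P.indep_vars M' (\<lambda>i \<omega>. \<omega> i) I"
    unfolding P_def' by (rule coord_indep[OF Mp Ine])
  define K where "K = (\<lambda>m::nat. {m * l + 1 .. m * l + l} \<times> E)"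
  have KI: "\<And>m. m \<in> UNIV \<Longrightarrow> K m \<subseteq> I" by (auto simp: K_def I_def)
  have disj: "disjoint_family_on K UNIV"
  proof (unfold disjoint_family_on_def, intro ballI impI)
    fix m n :: nat assume "m \<noteq> n"
    then have "m < n \<or> n < m" by arith
    then have "m * l + l \<le> n * l \<or> n * l + l \<le> m * l"
      by (metis add.commute mult_Suc Suc_leI mult_le_mono1)
    then show "K m \<inter> K n = {}" by (auto simp: K_def)
  qed
  have indK: "P.indep_vars (\<lambda>m. PiM (K m) M') (\<lambda>m \<omega>. restrict (\<lambda>i. \<omega> i) (K m)) UNIV"
    by (rule P.indep_vars_restrict[OF ind KI disj])
  have fK: "\<And>m. finite (K m)" using fE by (simp add: K_def)
  define A where "A = (\<lambda>m. space (PiM (K m) M') - PiE (K m) (\<lambda>_. {True}))"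
  have Asets: "\<And>m. A m \<in> sets (PiM (K m) M')"
    unfolding A_def by (intro sets.Diff sets.top sets_PiM_I_finite fK) (simp add: M'_def)
  define C where "C = (\<lambda>m. (\<lambda>\<omega>. restrict (\<lambda>i. \<omega> i) (K m)) -` A m \<inter> space P)"
  define B where "B = (\<lambda>m. {\<omega> \<in> space P. \<forall>ke\<in>K m. \<omega> ke \<in> {True}})"
  have CB: "\<And>m. C m = space P - B m"
    apply (auto simp: C_def B_def A_def space_PiM restrict_PiE_iff M'_def)
    by (metis restrict_apply')
  define p where "p = (\<Prod>e\<in>E. q e) ^ l"
  have ppos: "p > 0" unfolding p_def using q_range by (intro zero_less_power prod_pos) auto
  have ple: "p \<le> 1" using q_range by (auto simp: p_def intro!: power_le_one prod_nonneg prod_le_1)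
  have Csets: "\<And>m. C m \<in> P.events"
  proof -
    fix m
    have "(\<lambda>\<omega>. restrict (\<lambda>i. \<omega> i) (K m)) \<in> measurable P (PiM (K m) M')"
      using indK by (simp add: P.indep_vars_def)
    then show "C m \<in> P.events" unfolding C_def by (rule measurable_sets) (rule Asets)
  qed
  have Bsets: "\<And>m. B m \<in> P.events"
  proof -
    fix m
    have "B m = space P - C m" using CB[of m] by (auto simp: B_def)
    then show "B m \<in> P.events" using Csets by auto
  qed
  have probB: "\<And>m. P.prob (B m) = p"
  proof -
    fix m
    have "emeasure P (B m) = (\<Prod>ke\<in>K m. emeasure (M' ke) {True})"
      unfolding B_def P_def' by (rule PP.emeasure_PiM_Collect) (auto simp: KI fK M'_def)
    also have "\<dots> = (\<Prod>ke\<in>K m. ennreal (q (snd ke)))"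
      by (rule prod.cong) (auto simp: M'_def K_def emeasure_pmf_single q_range less_imp_le)
    also have "\<dots> = ennreal (\<Prod>ke\<in>K m. q (snd ke))"
      by (rule prod_ennreal) (auto simp: K_def q_range less_imp_le)
    also have "(\<Prod>ke\<in>K m. q (snd ke)) = (\<Prod>j\<in>{m * l + 1 .. m * l + l}. \<Prod>e\<in>E. q e)"
      unfolding K_def by (subst prod.cartesian_product) (simp add: case_prod_beta)
    also have "\<dots> = p" by (simp add: p_def)
    finally show "P.prob (B m) = p"
      using ppos by (simp add: P.emeasure_eq_measure)
  qed
  have probC: "\<And>m. P.prob (C m) = 1 - p"
    using CB probB Bsets by (simp add: P.prob_compl)
  have fin: "\<And>N k. P.prob (\<Inter>m\<in>{N..<N + Suc k}. C m) = (1 - p) ^ Suc k"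
  proof -
    fix N k
    have "P.prob (\<Inter>m\<in>{N..<N + Suc k}. C m) = (\<Prod>m\<in>{N..<N + Suc k}. P.prob (C m))"
      unfolding C_def by (rule P.indep_varsD[OF indK]) (auto simp: Asets)
    then show "P.prob (\<Inter>m\<in>{N..<N + Suc k}. C m) = (1 - p) ^ Suc k" by (simp add: probC)
  qed
  have null: "\<And>N. (\<Inter>m\<in>{N..}. C m) \<in> null_sets P"
  proof -
    fix N
    have Ts: "(\<Inter>m\<in>{N..}. C m) \<in> P.events" using Csets by auto
    have le: "\<And>k. P.prob (\<Inter>m\<in>{N..}. C m) \<le> (1 - p) ^ Suc k"
    proof -
      fix k
      have "P.prob (\<Inter>m\<in>{N..}. C m) \<le> P.prob (\<Inter>m\<in>{N..<N + Suc k}. C m)"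
        by (rule P.finite_measure_mono) (auto intro!: sets.finite_INT Csets)
      then show "P.prob (\<Inter>m\<in>{N..}. C m) \<le> (1 - p) ^ Suc k" using fin[of N k] by simp
    qed
    have "(\<lambda>k. (1 - p) ^ Suc k) \<longlonglongrightarrow> 0"
      using ppos ple by (intro LIMSEQ_Suc LIMSEQ_power_zero) auto
    then have "P.prob (\<Inter>m\<in>{N..}. C m) \<le> 0"
      by (rule LIMSEQ_le_const) (use le in auto)
    then have "P.prob (\<Inter>m\<in>{N..}. C m) = 0" by (simp add: measure_le_0_iff)
    then show "(\<Inter>m\<in>{N..}. C m) \<in> null_sets P" using Ts by (simp add: P.emeasure_eq_measure null_sets_def)
  qed
  have "AE \<omega> in P. \<forall>N. \<exists>m\<ge>N. \<forall>j\<in>{1..l}. \<forall>e\<in>E. \<omega> (m * l + j, e)"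
  proof (rule AE_all_countable[THEN iffD2], rule allI)
    fix N
    show "AE \<omega> in P. \<exists>m\<ge>N. \<forall>j\<in>{1..l}. \<forall>e\<in>E. \<omega> (m * l + j, e)"
    proof (rule AE_I'[OF null[of N]])
      show "{x \<in> space P. \<not> (\<exists>m\<ge>N. \<forall>j\<in>{1..l}. \<forall>e\<in>E. x (m * l + j, e))} \<subseteq> (\<Inter>m\<in>{N..}. C m)"
        by (auto simp: CB B_def K_def)
    qed
  qed
  then show ?thesis unfolding P_def .
qed


theorem lemma4:
  fixes E :: "('v::finite \<times> 'v) set"
    and q :: "'v \<times> 'v \<Rightarrow> real"
    and z0 :: "('v + 'v \<times> 'v) \<Rightarrow> real"
    and mu_z :: real
    and l :: nat
    and i :: 'v
  assumes strongly_connected: "\<forall>u v. (u, v) \<in> E\<^sup>*"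
    and self_loops: "\<forall>u. (u, u) \<in> E"
    and q_range: "\<forall>e\<in>E. 0 < q e \<and> q e \<le> 1"
    and z0_nodes: "\<forall>v. z0 (Inl v) \<ge> 0"
    and z0_links: "\<forall>e\<in>E. z0 (Inr e) = 0"
    and z0_sum: "(\<Sum>a\<in>idx E. z0 a) > 0"
    and mu_z_pos: "0 < mu_z"
    and mu_z_le: "mu_z \<le> (\<Sum>a\<in>idx E. z0 a)"
    and l_pos: "l > 0"
    and l_prop: "\<forall>v. \<exists>Ms. length Ms = l \<and> set Ms \<subseteq> Mset E \<and>
                       (\<forall>a\<in>idx E. matprod E Ms a (Inl v) > 0)"
  shows "AE \<omega> in Xprob E q.
           (\<exists>\<^sub>\<infinity>k. zseq E z0 \<omega> k (Inl i) \<ge> mu_z * cmin E ^ l / real (card (idx E)))"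
  proof -
  have fE: "finite E" by simp
  have En: "E \<noteq> {}" using self_loops by auto
  show ?thesis
    using prob_part[OF fE En q_range l_pos]
  proof (rule eventually_mono)
    fix \<omega> :: "nat \<times> ('v \<times> 'v) \<Rightarrow> bool"
    assume H: "\<forall>N. \<exists>m\<ge>N. \<forall>j\<in>{1..l}. \<forall>e\<in>E. \<omega> (m * l + j, e)"
    show "\<exists>\<^sub>\<infinity>k. zseq E z0 \<omega> k (Inl i) \<ge> mu_z * cmin E ^ l / real (card (idx E))"
      unfolding INFM_nat_le
    proof
      fix N
      obtain m where m: "m \<ge> N" "\<forall>j\<in>{1..l}. \<forall>e\<in>E. \<omega> (m * l + j, e)" using H by blast
      have "m \<le> m * l" using l_pos by simp
      then have "m * l + l \<ge> N" using m(1) by linarith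
      moreover have "zseq E z0 \<omega> (m * l + l) (Inl i) \<ge> mu_z * cmin E ^ l / real (card (idx E))"
        by (rule block_bound[OF self_loops z0_nodes z0_links mu_z_pos mu_z_le l_prop m(2)])
      ultimately show "\<exists>k\<ge>N. zseq E z0 \<omega> k (Inl i) \<ge> mu_z * cmin E ^ l / real (card (idx E))" by blast
    qed
  qed
qed

end
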